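(* Let $\mathbf{L}$ be a real symmetric $N\times N$ matrix with $\|\mathbf{L}\|\le\varrho$, orthonormal eigenvectors $\boldsymbol{\phi}_n$ and eigenvalues $\lambda_n$, $n=1,\dots,N$. Let $K\ge1$, $\psi^{(k)}\neq0,\varphi^{(k)}\in\mathbb{C}$ for $k=1,\dots,K$, $c\in\mathbb{C}$, and $\mathbf{x}\in\mathbb{C}^N$ fixed. Consider the parallel ARMA$_K$ recursion $$\mathbf{y}^{(k)}_{t+1}=\psi^{(k)}\mathbf{L}\mathbf{y}^{(k)}_t+\varphi^{(k)}\mathbf{x}\ (k=1,\dots,K),\qquad \mathbf{z}_{t+1}=\sum_{k=1}^K\mathbf{y}^{(k)}_{t+1}+c\,\mathbf{x},$$ with arbitrary initial conditions $\mathbf{y}^{(k)}_0$. Let $r_k=-\varphi^{(k)}/\psi^{(k)}$ and $p_k=1/\psi^{(k)}$. Then the frequency response of this recursion is $$H(\lambda)=c+\sum_{k=1}^K\frac{r_k}{\lambda-p_k}\qquad\text{subject to } |p_k|>\varrho \text{ for all } k,$$ i.e. under these conditions $\mathbf{z}_t$ converges linearly, irrespective of the initial conditions and of $\mathbf{L}$, to $\sum_{n=1}^N H(\lambda_n)\langle\mathbf{x},\boldsymbol{\phi}_n\rangle\boldsymbol{\phi}_n$.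
   Context: $\mathbf{L}$ is a symmetric local graph representation matrix (e.g. a possibly shifted graph Laplacian) of an undirected graph; all considered $\mathbf{L}$ have eigenvalues in $[\lambda_{\min},\lambda_{\max}]$ and $\varrho=\max\{|\lambda_{\min}|,|\lambda_{\max}|\}$. Linear convergence means convergence exponentially fast in $t$. *)

theory Defs
  imports "HOL-Analysis.Analysis"
begin

definition cmat :: "real^'n^'m \<Rightarrow> complex^'n^'m" where
  "cmat L = (\<chi> i j. complex_of_real (L $ i $ j))"

text \<open>Inner product <x, phi> = sum_i x_i * conj(phi_i) for complex x and real phi.\<close>
definition cinner_real :: "complex^'n \<Rightarrow> real^'n \<Rightarrow> complex" where
  "cinner_real x v = (\<Sum>i\<in>UNIV. x $ i * complex_of_real (v $ i))"

definition cvec :: "real^'n \<Rightarrow> complex^'n" where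
  "cvec v = (\<chi> i. complex_of_real (v $ i))"

definition arma_response ::
  "nat \<Rightarrow> complex \<Rightarrow> (nat \<Rightarrow> complex) \<Rightarrow> (nat \<Rightarrow> complex) \<Rightarrow> complex \<Rightarrow> complex" where
  "arma_response K c r p lam = c + (\<Sum>k=1..K. r k / (lam - p k))"

end

theory Submission imports Defs begin

lemma completeness:
  fixes \<phi> :: "'n::finite \<Rightarrow> real^'n"
  assumes orth: "\<And>n m. \<phi> n \<bullet> \<phi> m = (if n = m then 1 else 0)"
  shows "(\<Sum>n\<in>UNIV. \<phi> n $ i * \<phi> n $ j) = (if i = j then 1 else 0)"
proof -
  define P :: "real^'n^'n" where "P = (\<chi> n i. \<phi> n $ i)"
  have "P ** transpose P = mat 1"
    using orth by (simp add: P_def matrix_matrix_mult_def transpose_def mat_def vec_eq_iff inner_vec_def)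
  hence "transpose P ** P = mat 1" using matrix_left_right_inverse by blast
  hence "(transpose P ** P) $ i $ j = mat 1 $ i $ j" by simp
  thus ?thesis by (simp add: P_def matrix_matrix_mult_def transpose_def mat_def)
qed

lemma expansion:
  fixes \<phi> :: "'n::finite \<Rightarrow> real^'n" and w :: "complex^'n"
  assumes orth: "\<And>n m. \<phi> n \<bullet> \<phi> m = (if n = m then 1 else 0)"
  shows "w = (\<Sum>n\<in>UNIV. cinner_real w (\<phi> n) *s cvec (\<phi> n))"
proof -
  have "(\<Sum>n\<in>UNIV. cinner_real w (\<phi> n) *s cvec (\<phi> n)) $ j = w $ j" for j
  proof -
    have "(\<Sum>n\<in>UNIV. cinner_real w (\<phi> n) *s cvec (\<phi> n)) $ j
        = (\<Sum>n\<in>UNIV. \<Sum>i\<in>UNIV. w $ i * complex_of_real (\<phi> n $ i * \<phi> n $ j))"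
      by (simp add: cinner_real_def cvec_def sum_component sum_distrib_right mult.assoc)
    also have "\<dots> = (\<Sum>i\<in>UNIV. w $ i * complex_of_real (\<Sum>n\<in>UNIV. \<phi> n $ i * \<phi> n $ j))"
      by (subst sum.swap) (simp add: sum_distrib_left)
    also have "\<dots> = w $ j" by (simp add: completeness[OF orth] if_distrib cong: if_cong)
    finally show ?thesis .
  qed
  thus ?thesis by (simp add: vec_eq_iff)
qed

lemma cinner_L:
  fixes L :: "real^'n::finite^'n"
  assumes sym: "transpose L = L" and eig: "L *v v = l *\<^sub>R v"
  shows "cinner_real (cmat L *v w) v = of_real l * cinner_real w v"
proof -
  have Lij: "L $ i $ j = L $ j $ i" for i j using sym by (metis transpose_def vec_lambda_beta)
  have e: "(\<Sum>i\<in>UNIV. L $ j $ i * v $ i) = l * v $ j" for j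
    using arg_cong[OF eig, of "\<lambda>u. u $ j"] by (simp add: matrix_vector_mult_def)
  have "cinner_real (cmat L *v w) v = (\<Sum>i\<in>UNIV. \<Sum>j\<in>UNIV. w $ j * complex_of_real (L $ i $ j * v $ i))"
    by (simp add: cinner_real_def cmat_def matrix_vector_mult_def sum_distrib_left mult_ac)
  also have "\<dots> = (\<Sum>j\<in>UNIV. w $ j * complex_of_real (\<Sum>i\<in>UNIV. L $ j $ i * v $ i))"
    by (subst sum.swap) (simp add: sum_distrib_left Lij)
  also have "\<dots> = of_real l * cinner_real w v"
    unfolding e by (simp add: cinner_real_def sum_distrib_left mult_ac)
  finally show ?thesis .
qed

lemma cinner_add: "cinner_real (a + b) v = cinner_real a v + cinner_real b v"
  by (simp add: cinner_real_def sum.distrib algebra_simps)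
lemma cinner_smult: "cinner_real (s *s a) v = s * cinner_real a v"
  by (simp add: cinner_real_def sum_distrib_left mult_ac)
lemma cinner_sum: "finite A \<Longrightarrow> cinner_real (\<Sum>k\<in>A. f k) v = (\<Sum>k\<in>A. cinner_real (f k) v)"
  by (induction A rule: finite_induct) (auto simp: cinner_add, simp add: cinner_real_def)

lemma norm_smult_c: "norm ((s::complex) *s (a::complex^'n::finite)) = norm s * norm a"
  unfolding norm_vec_def by (simp add: L2_set_right_distrib norm_mult)

lemma norm_cvec: "norm (cvec v) = norm v"
  unfolding norm_vec_def cvec_def by simp

theorem theorem2:
  fixes L :: "real^'n^'n"
    and \<rho> :: real
    and \<phi> :: "'n \<Rightarrow> real^'n"
    and lam :: "'n \<Rightarrow> real"
    and K :: nat
    and \<psi> \<phi>c :: "nat \<Rightarrow> complex"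
    and c :: complex
    and x :: "complex^'n"
    and y :: "nat \<Rightarrow> nat \<Rightarrow> complex^'n"
    and z :: "nat \<Rightarrow> complex^'n"
  assumes sym: "transpose L = L"
    and normL: "onorm (\<lambda>v. L *v v) \<le> \<rho>"
    and eig: "\<And>n. L *v \<phi> n = lam n *\<^sub>R \<phi> n"
    and orthonormal: "\<And>n m. \<phi> n \<bullet> \<phi> m = (if n = m then 1 else 0)"
    and K1: "K \<ge> 1"
    and psi_nz: "\<And>k. k \<in> {1..K} \<Longrightarrow> \<psi> k \<noteq> 0"
    and rec_y: "\<And>k t. k \<in> {1..K} \<Longrightarrow>
                  y k (Suc t) = \<psi> k *s (cmat L *v y k t) + \<phi>c k *s x"
    and rec_z: "\<And>t. z (Suc t) = (\<Sum>k=1..K. y k (Suc t)) + c *s x"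
    and poles: "\<And>k. k \<in> {1..K} \<Longrightarrow> norm (1 / \<psi> k) > \<rho>"
  shows "\<exists>C q. 0 \<le> q \<and> q < 1 \<and>
           (\<forall>t. norm (z t - (\<Sum>n\<in>UNIV.
                 (arma_response K c (\<lambda>k. - \<phi>c k / \<psi> k) (\<lambda>k. 1 / \<psi> k)
                     (complex_of_real (lam n)) * cinner_real x (\<phi> n)) *s cvec (\<phi> n)))
              \<le> C * q ^ t)"
proof -
  have phinorm: "norm (\<phi> n) = 1" for n using orthonormal[of n n] by (simp add: norm_eq_sqrt_inner)
  have lamb: "\<bar>lam n\<bar> \<le> \<rho>" for n
  proof -
    have "norm (L *v \<phi> n) \<le> onorm ((*v) L) * norm (\<phi> n)"
      by (rule onorm[OF matrix_vector_mul_bounded_linear])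
    thus ?thesis using eig[of n] phinorm[of n] normL by simp
  qed
  obtain n0 :: 'n where True by blast
  have rho0: "0 \<le> \<rho>" using lamb[of n0] by simp
  define q where "q = Max ((\<lambda>k. cmod (\<psi> k) * \<rho>) ` {1..K})"
  have fin: "finite ((\<lambda>k. cmod (\<psi> k) * \<rho>) ` {1..K})" by simp
  have ne: "((\<lambda>k. cmod (\<psi> k) * \<rho>) ` {1..K}) \<noteq> {}" using K1 by auto
  have qk: "cmod (\<psi> k) * \<rho> \<le> q" if "k \<in> {1..K}" for k
    unfolding q_def using that fin by (intro Max_ge) auto
  have q0: "0 \<le> q" using qk[of 1] K1 rho0 by (meson atLeastAtMost_iff le_refl mult_nonneg_nonneg norm_ge_zero order_trans)
  have psirho: "cmod (\<psi> k) * \<rho> < 1" if "k \<in> {1..K}" for k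
  proof -
    have "\<rho> < cmod (1 / \<psi> k)" using poles[OF that] .
    hence "\<rho> * cmod (\<psi> k) < 1" using psi_nz[OF that]
      by (simp add: norm_divide field_simps)
    thus ?thesis by (simp add: mult.commute)
  qed
  have q1: "q < 1"
  proof -
    have "q \<in> ((\<lambda>k. cmod (\<psi> k) * \<rho>) ` {1..K})" unfolding q_def using fin ne by (rule Max_in)
    thus ?thesis using psirho by auto
  qed
  define s where "s k n = \<psi> k * complex_of_real (lam n)" for k n
  have sq: "cmod (s k n) \<le> q" if "k \<in> {1..K}" for k n
  proof -
    have "cmod (s k n) = cmod (\<psi> k) * \<bar>lam n\<bar>" by (simp add: s_def norm_mult)
    also have "\<dots> \<le> cmod (\<psi> k) * \<rho>" using lamb by (intro mult_left_mono) auto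
    finally show ?thesis using qk[OF that] by linarith
  qed
  have s1: "s k n \<noteq> 1" if "k \<in> {1..K}" for k n
    using sq[OF that, of n] q1 by auto
  define xn where "xn n = cinner_real x (\<phi> n)" for n
  define astar where "astar k n = \<phi>c k * xn n / (1 - s k n)" for k n
  define a where "a k t n = cinner_real (y k t) (\<phi> n)" for k t n
  have arec: "a k (Suc t) n = s k n * a k t n + \<phi>c k * xn n" if "k \<in> {1..K}" for k t n
    unfolding a_def xn_def s_def rec_y[OF that] cinner_add cinner_smult
    cinner_L[OF sym eig] by simp
  have astar_fix: "astar k n = s k n * astar k n + \<phi>c k * xn n" if "k \<in> {1..K}" for k n
    using s1[OF that, of n] unfolding astar_def by (simp add: field_simps)
  have closed: "a k t n - astar k n = s k n ^ t * (a k 0 n - astar k n)" if "k \<in> {1..K}" for k t n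
  proof (induction t)
    case 0 then show ?case by simp
  next
    case (Suc t)
    have "a k (Suc t) n - astar k n = s k n * (a k t n - astar k n)"
      using arec[OF that, of t n] astar_fix[OF that, of n] by (simp add: algebra_simps)
    then show ?case using Suc by simp
  qed
  define H where "H n = arma_response K c (\<lambda>k. - \<phi>c k / \<psi> k) (\<lambda>k. 1 / \<psi> k)
                     (complex_of_real (lam n)) * cinner_real x (\<phi> n)" for n
  have Hterm: "(- \<phi>c k / \<psi> k) / (complex_of_real (lam n) - 1 / \<psi> k) * xn n = astar k n"
    if "k \<in> {1..K}" for k n
  proof -
    have p: "\<psi> k \<noteq> 0" using psi_nz[OF that] .
    have "1 - s k n \<noteq> 0" using s1[OF that, of n] by simp
    hence "\<psi> k * complex_of_real (lam n) - 1 \<noteq> 0" unfolding s_def by (metis eq_iff_diff_eq_0)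
    moreover have "complex_of_real (lam n) - 1 / \<psi> k = (\<psi> k * complex_of_real (lam n) - 1) / \<psi> k"
      using p by (simp add: field_simps)
    ultimately show ?thesis using p unfolding astar_def s_def
      by (simp add: field_simps)
  qed
  have Hn: "H n = c * xn n + (\<Sum>k=1..K. astar k n)" for n
  proof -
    have "H n = c * xn n + (\<Sum>k=1..K. (- \<phi>c k / \<psi> k) / (complex_of_real (lam n) - 1 / \<psi> k) * xn n)"
      unfolding H_def arma_response_def xn_def[symmetric] by (simp only: distrib_right sum_distrib_right)
    also have "\<dots> = c * xn n + (\<Sum>k=1..K. astar k n)"
      by (intro arg_cong2[where f="(+)"] refl sum.cong) (auto simp only: Hterm)
    finally show ?thesis .
  qed
  define T where "T = (\<Sum>n\<in>UNIV. H n *s cvec (\<phi> n))"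
  have diffexp: "z t - T = (\<Sum>n\<in>UNIV. (cinner_real (z t) (\<phi> n) - H n) *s cvec (\<phi> n))" for t
  proof -
    have "z t - T = (\<Sum>n\<in>UNIV. cinner_real (z t) (\<phi> n) *s cvec (\<phi> n)) - T"
      using expansion[OF orthonormal, of "z t"] by simp
    also have "\<dots> = (\<Sum>n\<in>UNIV. (cinner_real (z t) (\<phi> n) - H n) *s cvec (\<phi> n))"
      unfolding T_def sum_subtractf[symmetric]
      by (rule sum.cong) (auto simp: vec_eq_iff algebra_simps)
    finally show ?thesis .
  qed
  have normbound: "norm (z t - T) \<le> (\<Sum>n\<in>UNIV. cmod (cinner_real (z t) (\<phi> n) - H n))" for t
    unfolding diffexp
    by (rule order_trans[OF norm_sum], rule sum_mono, subst norm_smult_c, simp add: norm_cvec phinorm)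
  define D where "D n = (\<Sum>k=1..K. cmod (a k 0 n - astar k n))" for n
  have coef: "cmod (cinner_real (z (Suc m)) (\<phi> n) - H n) \<le> q ^ Suc m * D n" for m n
  proof -
    have "cinner_real (z (Suc m)) (\<phi> n) - H n = (\<Sum>k=1..K. a k (Suc m) n - astar k n)"
    proof -
      have "cinner_real (z (Suc m)) (\<phi> n) = (\<Sum>k=1..K. a k (Suc m) n) + c * xn n"
        unfolding rec_z cinner_add cinner_sum[OF finite_atLeastAtMost] cinner_smult a_def xn_def
        by (rule refl)
      thus ?thesis by (simp only: Hn sum_subtractf) (simp add: algebra_simps)
    qed
    also have "\<dots> = (\<Sum>k=1..K. s k n ^ Suc m * (a k 0 n - astar k n))"
      by (rule sum.cong[OF refl]) (rule closed, simp)
    finally have e: "cinner_real (z (Suc m)) (\<phi> n) - H n = (\<Sum>k=1..K. s k n ^ Suc m * (a k 0 n - astar k n))" .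
    have "cmod (\<Sum>k=1..K. s k n ^ Suc m * (a k 0 n - astar k n)) \<le> (\<Sum>k=1..K. q ^ Suc m * cmod (a k 0 n - astar k n))"
    proof (rule order_trans[OF norm_sum], rule sum_mono)
      fix k assume k: "k \<in> {1..K}"
      have "cmod (s k n) ^ Suc m \<le> q ^ Suc m" by (rule power_mono[OF sq[OF k]]) simp
      thus "cmod (s k n ^ Suc m * (a k 0 n - astar k n)) \<le> q ^ Suc m * cmod (a k 0 n - astar k n)"
        unfolding norm_mult norm_power by (rule mult_right_mono) simp
    qed
    thus ?thesis unfolding e D_def sum_distrib_left .
  qed
  define C where "C = max (\<Sum>n\<in>UNIV. D n) (norm (z 0 - T))"
  have "norm (z t - T) \<le> C * q ^ t" for t
  proof (cases t)
    case 0 then show ?thesis by (simp add: C_def)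
  next
    case (Suc m)
    have "norm (z t - T) \<le> (\<Sum>n\<in>UNIV. q ^ Suc m * D n)"
    proof -
      have "(\<Sum>n\<in>UNIV. cmod (cinner_real (z (Suc m)) (\<phi> n) - H n)) \<le> (\<Sum>n\<in>UNIV. q ^ Suc m * D n)"
        by (rule sum_mono) (rule coef)
      thus ?thesis using normbound[of t] unfolding Suc by (rule order_trans[rotated])
    qed
    also have "\<dots> = q ^ t * (\<Sum>n\<in>UNIV. D n)" using Suc by (simp only: sum_distrib_left)
    also have "\<dots> = (\<Sum>n\<in>UNIV. D n) * q ^ t" by (rule mult.commute)
    also have "\<dots> \<le> C * q ^ t" unfolding C_def using q0 by (intro mult_right_mono) auto
    finally show ?thesis .
  qed
  hence "\<forall>t. norm (z t - T) \<le> C * q ^ t" by blast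
  hence "0 \<le> q \<and> q < 1 \<and> (\<forall>t. norm (z t - T) \<le> C * q ^ t)" using q0 q1 by blast
  hence "\<exists>C q. 0 \<le> q \<and> q < 1 \<and> (\<forall>t. norm (z t - T) \<le> C * q ^ t)" by blast
  thus ?thesis unfolding T_def H_def .

qed

end
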